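(* Let $\mathcal{D}$ be a distribution over $\mathcal{X}\times\{0,1\}$, let $\mathcal{H}$ be a finite class of functions $\mathcal{X}\to[0,1]$, and let the loss be $\ell(a,y)=f_1(a)+y f_2(a)$ with $f_1,f_2:[0,1]\to\mathbb{R}$. Assume that, with $\bar\ell(a,b)=f_1(a)+b f_2(a)$ for $a,b\in[0,1]$, there are constants $C_1>c_1>0$ and $C_2>c_2>0$ such that for all $a,b\in[0,1]$ and $i=1,2$, $$\frac{C_i}{2}\big(f_i(a)-f_i(b)\big)^2\ge\bar\ell(a,b)-\bar\ell(b,b)\ge\frac{c_i}{2}\big(f_i(a)-f_i(b)\big)^2.$$ Let $\mathcal{L}(h)=\mathbb{E}_{(x,y)\sim\mathcal{D}}[\ell(h(x),y)]$, let $\widehat h^\star\in\arg\min_{h\in\mathcal{H}}\mathcal{L}(h)$, let $h^\star=\arg\min_{h:\mathcal{X}\to[0,1]}\mathcal{L}(h)$ be the Bayes optimal predictor (minimum over measurable functions), and for $h_1,h_2$ define $\gamma_{f_i}(h_1,h_2)=\mathbb{E}_x[(f_i(h_1(x))-f_i(h_2(x)))^2]$. Then for every $h\in\mathcal{H}$ and $i=1,2$, $$\gamma_{f_i}(h,\widehat h^\star)\le\frac4{c_i}\big(\mathcal{L}(h)-\mathcal{L}(\widehat h^\star)\big)+2\Big(\frac{C_i}{c_i}+1\Big)\gamma_{f_i}(\widehat h^\star,h^\star).$$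
   Context: $x$ denotes a random feature vector distributed as the $\mathcal{X}$-marginal of $\mathcal{D}$. *)

theory Defs
  imports "HOL-Probability.Probability"
begin

definition loss :: "(real \<Rightarrow> real) \<Rightarrow> (real \<Rightarrow> real) \<Rightarrow> real \<Rightarrow> bool \<Rightarrow> real" where
  "loss f1 f2 a y = f1 a + of_bool y * f2 a"

definition lossbar :: "(real \<Rightarrow> real) \<Rightarrow> (real \<Rightarrow> real) \<Rightarrow> real \<Rightarrow> real \<Rightarrow> real" where
  "lossbar f1 f2 a b = f1 a + b * f2 a"

definition risk :: "('a \<times> bool) measure \<Rightarrow> (real \<Rightarrow> real) \<Rightarrow> (real \<Rightarrow> real) \<Rightarrow> ('a \<Rightarrow> real) \<Rightarrow> real" where
  "risk D f1 f2 h = (\<integral>z. loss f1 f2 (h (fst z)) (snd z) \<partial>D)"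

definition xmarginal :: "('a \<times> bool) measure \<Rightarrow> 'a measure \<Rightarrow> 'a measure" where
  "xmarginal D X = distr D X fst"

definition gamma :: "('a \<times> bool) measure \<Rightarrow> 'a measure \<Rightarrow> (real \<Rightarrow> real) \<Rightarrow> ('a \<Rightarrow> real) \<Rightarrow> ('a \<Rightarrow> real) \<Rightarrow> real" where
  "gamma D X f h1 h2 = (\<integral>x. (f (h1 x) - f (h2 x))\<^sup>2 \<partial>(xmarginal D X))"

definition predictor :: "'a measure \<Rightarrow> ('a \<Rightarrow> real) \<Rightarrow> bool" where
  "predictor X h \<longleftrightarrow> h \<in> borel_measurable X \<and> (\<forall>x\<in>space X. h x \<in> {0..1})"

end

theory Submission
  imports Defs
begin

lemma bayes_density:
  fixes D :: "('a \<times> bool) measure" and X :: "'a measure"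
  assumes P: "prob_space D" and fm: "fst \<in> measurable D X"
    and ym: "(\<lambda>z. of_bool (snd z) :: real) \<in> borel_measurable D"
  obtains \<eta> :: "'a \<Rightarrow> real" where "\<eta> \<in> borel_measurable X" "\<And>x. 0 \<le> \<eta> x"
   "integrable (distr D X fst) \<eta>"
   "\<And>\<phi> :: 'a \<Rightarrow> real. \<phi> \<in> borel_measurable X \<Longrightarrow>
      (\<integral>z. of_bool (snd z) * \<phi> (fst z) \<partial>D) = (\<integral>x. \<eta> x * \<phi> x \<partial>distr D X fst)"
proof -
  interpret D: prob_space D by fact
  let ?y = "\<lambda>z. of_bool (snd z) :: real"
  define \<mu> where "\<mu> = distr D X fst"
  define \<nu> where "\<nu> = distr (density D ?y) X fst"
  interpret mu: prob_space \<mu> unfolding \<mu>_def by (rule D.prob_space_distr[OF fm])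
  have fm': "fst \<in> measurable (density D ?y) X" using fm by simp
  have sets_nu: "sets \<nu> = sets \<mu>" unfolding \<nu>_def \<mu>_def by simp
  have fin: "finite_measure \<nu>"
  proof (rule finite_measureI)
    have "emeasure \<nu> (space \<nu>) = emeasure (density D ?y) (space D)"
      unfolding \<nu>_def using fm' measurable_space[OF fm]
      by (simp add: emeasure_distr Int_absorb1 subset_eq)
    also have "\<dots> = (\<integral>\<^sup>+ z. ennreal (?y z) * indicator (space D) z \<partial>D)"
      using ym by (simp add: emeasure_density)
    also have "\<dots> \<le> (\<integral>\<^sup>+ z. 1 \<partial>D)"
      by (intro nn_integral_mono) (auto simp: indicator_def)
    also have "\<dots> < \<infinity>" by (simp add: D.emeasure_space_1)
    finally show "emeasure \<nu> (space \<nu>) \<noteq> \<infinity>" by simp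
  qed
  have ac: "absolutely_continuous \<mu> \<nu>"
    unfolding absolutely_continuous_def
  proof
    fix A assume A: "A \<in> null_sets \<mu>"
    then have "fst -` A \<inter> space D \<in> null_sets D" "A \<in> sets X"
      unfolding \<mu>_def using null_sets_distr_iff[OF fm] by auto
    moreover have "AE z in D. fst z \<in> A \<longrightarrow> \<not> snd z"
      using AE_not_in[OF \<open>fst -` A \<inter> space D \<in> null_sets D\<close>] AE_space
      by eventually_elim auto
    ultimately show "A \<in> null_sets \<nu>"
      unfolding \<nu>_def using null_sets_distr_iff[OF fm'] null_sets_density_iff[of ?y D] ym
      by (auto intro: AE_not_in[THEN eventually_mono])
  qed
  define \<eta> where "\<eta> x = enn2real (RN_deriv \<mu> \<nu> x)" for x
  show ?thesis
  proof (rule that[of \<eta>])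
    have "RN_deriv \<mu> \<nu> \<in> borel_measurable X"
      using borel_measurable_RN_deriv[of \<mu> \<nu>] measurable_cong_sets[of \<mu> X borel borel]
      unfolding \<mu>_def by simp
    then show "\<eta> \<in> borel_measurable X" unfolding \<eta>_def by (rule borel_measurable_enn2real)
    show "0 \<le> \<eta> x" for x unfolding \<eta>_def by simp
    have "integrable \<nu> (\<lambda>x. 1::real)"
      using fin by (simp add: finite_measure.integrable_const)
    then have "integrable \<mu> (\<lambda>x. \<eta> x * 1)"
      unfolding \<eta>_def
      by (subst (asm) mu.RN_deriv_integrable[OF _ ac sets_nu])
         (use fin in \<open>auto intro: finite_measure.sigma_finite_measure\<close>)
    then show "integrable (distr D X fst) \<eta>" by (simp add: \<mu>_def)
    fix \<phi> :: "'a \<Rightarrow> real" assume phi: "\<phi> \<in> borel_measurable X"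
    have "(\<integral>z. ?y z * \<phi> (fst z) \<partial>D) = (\<integral>z. \<phi> (fst z) \<partial>density D ?y)"
      using integral_density[of "\<lambda>z. \<phi> (fst z)" D ?y] phi fm ym by simp
    also have "\<dots> = (\<integral>x. \<phi> x \<partial>\<nu>)"
      unfolding \<nu>_def using integral_distr[OF fm' phi] by simp
    also have "\<dots> = (\<integral>x. \<eta> x * \<phi> x \<partial>\<mu>)"
      unfolding \<eta>_def
      by (rule mu.RN_deriv_integral[OF _ ac sets_nu])
         (use fin phi in \<open>auto simp: \<mu>_def intro: finite_measure.sigma_finite_measure\<close>)
    finally show "(\<integral>z. of_bool (snd z) * \<phi> (fst z) \<partial>D) = (\<integral>x. \<eta> x * \<phi> x \<partial>distr D X fst)"
      unfolding \<mu>_def .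
  qed
qed

theorem lemma2:
  fixes X :: "'a measure" and D :: "('a \<times> bool) measure"
    and f :: "nat \<Rightarrow> real \<Rightarrow> real" and C c :: "nat \<Rightarrow> real"
    and H :: "('a \<Rightarrow> real) set" and hhat hstar :: "'a \<Rightarrow> real"
  assumes D: "prob_space D" "sets D = sets (X \<Otimes>\<^sub>M count_space UNIV)"
    and fmeas: "\<And>i. i \<in> {1,2} \<Longrightarrow> f i \<in> borel_measurable (restrict_space borel {0..1})"
    and Cc: "\<And>i. i \<in> {1,2} \<Longrightarrow> C i > c i \<and> c i > 0"
    and sandwich: "\<And>i a b. i \<in> {1,2} \<Longrightarrow> a \<in> {0..1} \<Longrightarrow> b \<in> {0..1} \<Longrightarrow>
        C i / 2 * (f i a - f i b)\<^sup>2 \<ge> lossbar (f 1) (f 2) a b - lossbar (f 1) (f 2) b b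
      \<and> lossbar (f 1) (f 2) a b - lossbar (f 1) (f 2) b b \<ge> c i / 2 * (f i a - f i b)\<^sup>2"
    and H: "finite H" "\<And>h. h \<in> H \<Longrightarrow> predictor X h"
    and hhat: "hhat \<in> H" "\<And>h. h \<in> H \<Longrightarrow> risk D (f 1) (f 2) hhat \<le> risk D (f 1) (f 2) h"
    and hstar: "predictor X hstar"
      "\<And>h. predictor X h \<Longrightarrow> risk D (f 1) (f 2) hstar \<le> risk D (f 1) (f 2) h"
  shows "\<forall>h\<in>H. \<forall>i\<in>{1,2}.
    gamma D X (f i) h hhat \<le> 4 / c i * (risk D (f 1) (f 2) h - risk D (f 1) (f 2) hhat)
      + 2 * (C i / c i + 1) * gamma D X (f i) hhat hstar"
proof -
  interpret D: prob_space D by (rule D(1))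
  have fm: "fst \<in> measurable D X"
    using measurable_fst[of X "count_space UNIV"] measurable_cong_sets[OF D(2) refl, of X] by simp
  have sm: "snd \<in> measurable D (count_space (UNIV::bool set))"
    using measurable_snd[of X "count_space UNIV"]
      measurable_cong_sets[OF D(2) refl, of "count_space (UNIV::bool set)"] by simp
  have ym: "(\<lambda>z. of_bool (snd z) :: real) \<in> borel_measurable D"
    using measurable_comp[OF sm, of "\<lambda>b. of_bool b :: real" borel] by (simp add: o_def)
  define \<mu> where "\<mu> = distr D X fst"
  interpret mu: prob_space \<mu> unfolding \<mu>_def by (rule D.prob_space_distr[OF fm])
  have space_mu: "space \<mu> = space X" and sets_mu: "sets \<mu> = sets X" unfolding \<mu>_def by auto
  have gam: "gamma D X F g1 g2 = (\<integral>x. (F (g1 x) - F (g2 x))\<^sup>2 \<partial>\<mu>)" for F g1 g2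
    unfolding gamma_def xmarginal_def \<mu>_def ..
  obtain \<eta>0 :: "'a \<Rightarrow> real" where e0m: "\<eta>0 \<in> borel_measurable X" and e0pos: "\<And>x. 0 \<le> \<eta>0 x"
    and e0int: "integrable \<mu> \<eta>0"
    and key0: "\<And>\<phi> :: 'a \<Rightarrow> real. \<phi> \<in> borel_measurable X \<Longrightarrow>
      (\<integral>z. of_bool (snd z) * \<phi> (fst z) \<partial>D) = (\<integral>x. \<eta>0 x * \<phi> x \<partial>\<mu>)"
    using bayes_density[OF D(1) fm ym] unfolding \<mu>_def by blast
  have fmu: "\<And>F::'a\<Rightarrow>real. F \<in> borel_measurable X \<Longrightarrow> (\<integral>z. F (fst z) \<partial>D) = (\<integral>x. F x \<partial>\<mu>)"
    unfolding \<mu>_def by (rule integral_distr[OF fm, symmetric])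
  have le1: "AE x in \<mu>. \<eta>0 x \<le> 1"
  proof -
    define A where "A = {x \<in> space X. 1 < \<eta>0 x}"
    have A: "A \<in> sets X" unfolding A_def using e0m by measurable
    have "(\<integral>x. \<eta>0 x * indicator A x \<partial>\<mu>) = (\<integral>z. of_bool (snd z) * indicator A (fst z) \<partial>D)"
      using key0[of "indicator A"] A by simp
    also have "\<dots> \<le> (\<integral>z. indicator A (fst z) \<partial>D)"
      using A fm ym
      by (intro integral_mono D.integrable_const_bound[where B=1]) (auto simp: indicator_def)
    also have "\<dots> = (\<integral>x. indicator A x \<partial>\<mu>)"
      using A by (intro fmu) simp
    finally have "(\<integral>x. (\<eta>0 x - 1) * indicator A x \<partial>\<mu>) \<le> 0"
      using A e0int sets_mu
      by (simp add: left_diff_distrib integrable_real_mult_indicator mu.integrable_const_bound[where B=1]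
                    Bochner_Integration.integral_diff)
    moreover have i1: "integrable \<mu> (\<lambda>x. (\<eta>0 x - 1) * indicator A x)"
      using A e0int sets_mu
      by (intro integrable_real_mult_indicator Bochner_Integration.integrable_diff) auto
    moreover have "AE x in \<mu>. 0 \<le> (\<eta>0 x - 1) * indicator A x"
      by (auto simp: A_def indicator_def)
    ultimately have "AE x in \<mu>. (\<eta>0 x - 1) * indicator A x = 0"
      using integral_nonneg_eq_0_iff_AE[OF i1] integral_nonneg_AE[of "\<lambda>x. (\<eta>0 x - 1) * indicator A x" \<mu>]
      by linarith
    moreover have "AE x in \<mu>. x \<in> space \<mu>" by (rule AE_space)
    ultimately show ?thesis
      by eventually_elim (auto simp: A_def indicator_def space_mu split: if_splits)
  qed
  define \<eta> where "\<eta> x = min 1 (\<eta>0 x)" for x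
  have em: "\<eta> \<in> borel_measurable X" unfolding \<eta>_def using e0m by measurable
  have AEe: "AE x in \<mu>. \<eta> x = \<eta>0 x" using le1 by eventually_elim (simp add: \<eta>_def)
  have epred: "predictor X \<eta>" unfolding predictor_def using em e0pos by (simp add: \<eta>_def)
  have bmu: "borel_measurable \<mu> = borel_measurable X" by (rule measurable_cong_sets[OF sets_mu refl])
  have key: "(\<integral>z. of_bool (snd z) * \<phi> (fst z) \<partial>D) = (\<integral>x. \<eta> x * \<phi> x \<partial>\<mu>)"
    if "\<phi> \<in> borel_measurable X" for \<phi> :: "'a \<Rightarrow> real"
  proof -
    have "(\<integral>x. \<eta>0 x * \<phi> x \<partial>\<mu>) = (\<integral>x. \<eta> x * \<phi> x \<partial>\<mu>)"
      using that e0m em AEe by (intro integral_cong_AE) (auto simp: bmu)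
    then show ?thesis using key0[OF that] by simp
  qed
  have pm: "(\<lambda>x. f i (g x)) \<in> borel_measurable X" if "predictor X g" "i \<in> {1,2}" for g i
  proof -
    have "g \<in> X \<rightarrow>\<^sub>M restrict_space borel {0..1}"
      using that(1) unfolding predictor_def by (intro measurable_restrict_space2) auto
    then show ?thesis using measurable_comp[OF _ fmeas[OF that(2)]] by (simp add: o_def)
  qed
  have c1: "c 1 > 0" and c2: "c 2 > 0" using Cc[of 1] Cc[of 2] by auto
  define B where "B = \<bar>f 1 0\<bar> + 2 / c 1 + \<bar>f 2 0\<bar> + 1 + 4 / (c 1 * c 2)"
  have fb: "\<bar>f i a\<bar> \<le> B" if "i \<in> {1,2}" "a \<in> {0..1}" for i a
  proof -
    define t where "t = f 1 a - f 1 0"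
    define s where "s = f 2 a - f 2 0"
    have s1: "t \<ge> c 1 / 2 * t\<^sup>2" using sandwich[of 1 a 0] that
      by (simp add: lossbar_def t_def)
    have s2: "t \<ge> c 2 / 2 * s\<^sup>2" using sandwich[of 2 a 0] that
      by (simp add: lossbar_def t_def s_def)
    have "0 \<le> c 1 / 2 * t\<^sup>2" using c1 by simp
    then have t0: "t \<ge> 0" using s1 by linarith
    have tle: "t \<le> 2 / c 1"
    proof (cases "t = 0")
      case False
      then have tp: "t > 0" using t0 by simp
      have "(c 1 / 2 * t) * t \<le> 1 * t" using s1 by (simp add: power2_eq_square algebra_simps)
      then have "c 1 / 2 * t \<le> 1" using tp by (rule mult_right_le_imp_le)
      then show ?thesis using c1 by (simp add: field_simps)
    qed (use c1 in simp)
    have "s\<^sup>2 \<le> 2 * t / c 2" using s2 c2 by (simp add: field_simps)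
    also have "\<dots> \<le> 4 / (c 1 * c 2)" using tle c2 c1 by (simp add: field_simps)
    finally have ss: "s\<^sup>2 \<le> 4 / (c 1 * c 2)" .
    have "\<bar>s\<bar> \<le> 1 + s\<^sup>2"
    proof (cases "\<bar>s\<bar> \<le> 1")
      case False
      then have "\<bar>s\<bar> * 1 \<le> \<bar>s\<bar> * \<bar>s\<bar>" by (intro mult_left_mono) auto
      then show ?thesis by (simp add: power2_eq_square)
    qed (simp add: add_increasing2)
    have p: "0 \<le> 4 / (c 1 * c 2)" using c1 c2 by simp
    have e1: "\<bar>f 1 a\<bar> \<le> \<bar>f 1 0\<bar> + \<bar>t\<bar>" unfolding t_def by linarith
    have e2: "\<bar>f 2 a\<bar> \<le> \<bar>f 2 0\<bar> + \<bar>s\<bar>" unfolding s_def by linarith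
    have "\<bar>t\<bar> = t" using t0 by simp
    have "0 \<le> 2 / c 1" using c1 by simp
    show ?thesis using that e1 e2 t0 tle ss \<open>\<bar>s\<bar> \<le> 1 + s\<^sup>2\<close> p \<open>\<bar>t\<bar> = t\<close> \<open>0 \<le> 2 / c 1\<close>
      unfolding B_def
    proof -
      have "i = 1 \<or> i = 2" using that by auto
      moreover have "\<bar>f 1 a\<bar> \<le> \<bar>f 1 0\<bar> + 2 / c 1 + \<bar>f 2 0\<bar> + 1 + 4 / (c 1 * c 2)"
        using e1 tle \<open>\<bar>t\<bar> = t\<close> p abs_ge_zero[of "f 2 0"] by linarith
      moreover have "\<bar>f 2 a\<bar> \<le> \<bar>f 1 0\<bar> + 2 / c 1 + \<bar>f 2 0\<bar> + 1 + 4 / (c 1 * c 2)"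
        using e2 ss \<open>\<bar>s\<bar> \<le> 1 + s\<^sup>2\<close> \<open>0 \<le> 2 / c 1\<close> abs_ge_zero[of "f 1 0"] by linarith
      ultimately show "\<bar>f i a\<bar> \<le> \<bar>f 1 0\<bar> + 2 / c 1 + \<bar>f 2 0\<bar> + 1 + 4 / (c 1 * c 2)" by auto
    qed
  qed
  have B0: "0 \<le> B" using fb[of 1 0] by simp
  have eb: "\<eta> x \<in> {0..1}" for x using e0pos[of x] by (simp add: \<eta>_def)
  have intX: "integrable \<mu> F" if "F \<in> borel_measurable X" "\<And>x. x \<in> space X \<Longrightarrow> \<bar>F x\<bar> \<le> K"
    for F :: "'a \<Rightarrow> real" and K
    using that by (intro mu.integrable_const_bound[where B=K]) (auto simp: bmu space_mu intro!: AE_I2)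
  have intD: "integrable D F" if "F \<in> borel_measurable D" "\<And>z. z \<in> space D \<Longrightarrow> \<bar>F z\<bar> \<le> K"
    for F :: "'a \<times> bool \<Rightarrow> real" and K
    using that by (intro D.integrable_const_bound[where B=K]) (auto intro!: AE_I2)
  have pr: "g x \<in> {0..1}" if "predictor X g" "x \<in> space X" for g x
    using that unfolding predictor_def by auto
  have fstsp: "fst z \<in> space X" if "z \<in> space D" for z using measurable_space[OF fm that] .
  have riskf: "risk D (f 1) (f 2) g = (\<integral>x. f 1 (g x) + \<eta> x * f 2 (g x) \<partial>\<mu>)" if g: "predictor X g" for g
  proof -
    have m1: "(\<lambda>x. f 1 (g x)) \<in> borel_measurable X" and m2: "(\<lambda>x. f 2 (g x)) \<in> borel_measurable X"
      using pm[OF g] by auto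
    have "risk D (f 1) (f 2) g = (\<integral>z. f 1 (g (fst z)) + of_bool (snd z) * f 2 (g (fst z)) \<partial>D)"
      unfolding risk_def loss_def ..
    also have "\<dots> = (\<integral>z. f 1 (g (fst z)) \<partial>D) + (\<integral>z. of_bool (snd z) * f 2 (g (fst z)) \<partial>D)"
    proof (rule Bochner_Integration.integral_add)
      show "integrable D (\<lambda>z. f 1 (g (fst z)))"
        using measurable_comp[OF fm m1] fb pr[OF g] fstsp by (intro intD[of _ B]) (auto simp: o_def)
      show "integrable D (\<lambda>z. of_bool (snd z) * f 2 (g (fst z)))"
        using measurable_comp[OF fm m2] ym fb pr[OF g] fstsp B0
        by (intro intD[of _ B]) (auto simp: o_def)
    qed
    also have "\<dots> = (\<integral>x. f 1 (g x) \<partial>\<mu>) + (\<integral>x. \<eta> x * f 2 (g x) \<partial>\<mu>)"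
      using fmu[OF m1] key[OF m2] by simp
    also have "\<dots> = (\<integral>x. f 1 (g x) + \<eta> x * f 2 (g x) \<partial>\<mu>)"
    proof (rule Bochner_Integration.integral_add[symmetric])
      show "integrable \<mu> (\<lambda>x. f 1 (g x))"
        using m1 fb pr[OF g] by (intro intX[of _ B]) auto
      show "integrable \<mu> (\<lambda>x. \<eta> x * f 2 (g x))"
    proof (rule intX[of _ B])
      fix x assume x: "x \<in> space X"
      have "\<bar>\<eta> x * f 2 (g x)\<bar> = \<eta> x * \<bar>f 2 (g x)\<bar>" using eb[of x] by (simp add: abs_mult)
      also have "\<dots> \<le> 1 * B" using eb[of x] fb[of 2 "g x"] pr[OF g x] B0
        by (intro mult_mono) auto
      finally show "\<bar>\<eta> x * f 2 (g x)\<bar> \<le> B" by simp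
    qed (use m2 em in measurable)
    qed
    finally show ?thesis .
  qed
  have intL: "integrable \<mu> (\<lambda>x. f 1 (g x) + \<eta> x * f 2 (g x))" if g: "predictor X g" for g
  proof -
    have m1: "(\<lambda>x. f 1 (g x)) \<in> borel_measurable X" and m2: "(\<lambda>x. f 2 (g x)) \<in> borel_measurable X"
      using pm[OF g] by auto
    show ?thesis
    proof (rule intX[of _ "B + B"])
      fix x assume x: "x \<in> space X"
      have "\<bar>\<eta> x * f 2 (g x)\<bar> = \<eta> x * \<bar>f 2 (g x)\<bar>" using eb[of x] by (simp add: abs_mult)
      also have "\<dots> \<le> 1 * B" using eb[of x] fb[of 2 "g x"] pr[OF g x] B0
        by (intro mult_mono) auto
      finally show "\<bar>f 1 (g x) + \<eta> x * f 2 (g x)\<bar> \<le> B + B"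
        using fb[of 1 "g x"] pr[OF g x] by simp
    qed (use m1 m2 em in measurable)
  qed
  have intS: "integrable \<mu> (\<lambda>x. (f i (g x) - f i (g' x))\<^sup>2)"
    if g: "predictor X g" and g': "predictor X g'" and i: "i \<in> {1,2}" for g g' i
  proof (rule intX[of _ "(B + B)\<^sup>2"])
    fix x assume x: "x \<in> space X"
    have "\<bar>f i (g x) - f i (g' x)\<bar> \<le> B + B"
      using fb[OF i pr[OF g x]] fb[OF i pr[OF g' x]] by linarith
    then have "\<bar>f i (g x) - f i (g' x)\<bar>\<^sup>2 \<le> (B + B)\<^sup>2"
      by (intro power_mono) auto
    then show "\<bar>(f i (g x) - f i (g' x))\<^sup>2\<bar> \<le> (B + B)\<^sup>2" by simp
  qed (use pm[OF g i] pm[OF g' i] in measurable)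
  have Ldiff: "risk D (f 1) (f 2) g - risk D (f 1) (f 2) \<eta> =
     (\<integral>x. lossbar (f 1) (f 2) (g x) (\<eta> x) - lossbar (f 1) (f 2) (\<eta> x) (\<eta> x) \<partial>\<mu>)"
    if g: "predictor X g" for g
    unfolding riskf[OF g] riskf[OF epred] lossbar_def
    by (rule Bochner_Integration.integral_diff[symmetric, OF intL[OF g] intL[OF epred]])
  have sand: "c i / 2 * gamma D X (f i) g \<eta> \<le> risk D (f 1) (f 2) g - risk D (f 1) (f 2) \<eta>
     \<and> risk D (f 1) (f 2) g - risk D (f 1) (f 2) \<eta> \<le> C i / 2 * gamma D X (f i) g \<eta>"
    if g: "predictor X g" and i: "i \<in> {1,2}" for g i
  proof -
    have iL: "integrable \<mu> (\<lambda>x. lossbar (f 1) (f 2) (g x) (\<eta> x) - lossbar (f 1) (f 2) (\<eta> x) (\<eta> x))"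
      unfolding lossbar_def using intL[OF g] intL[OF epred] by (rule Bochner_Integration.integrable_diff)
    have "c i / 2 * gamma D X (f i) g \<eta> = (\<integral>x. c i / 2 * (f i (g x) - f i (\<eta> x))\<^sup>2 \<partial>\<mu>)"
      unfolding gam by simp
    also have "\<dots> \<le> (\<integral>x. lossbar (f 1) (f 2) (g x) (\<eta> x) - lossbar (f 1) (f 2) (\<eta> x) (\<eta> x) \<partial>\<mu>)"
      using intS[OF g epred i] iL sandwich[OF i pr[OF g] eb] by (intro integral_mono) (auto simp: space_mu)
    finally have 1: "c i / 2 * gamma D X (f i) g \<eta> \<le> risk D (f 1) (f 2) g - risk D (f 1) (f 2) \<eta>"
      using Ldiff[OF g] by simp
    have "(\<integral>x. lossbar (f 1) (f 2) (g x) (\<eta> x) - lossbar (f 1) (f 2) (\<eta> x) (\<eta> x) \<partial>\<mu>)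
        \<le> (\<integral>x. C i / 2 * (f i (g x) - f i (\<eta> x))\<^sup>2 \<partial>\<mu>)"
      using intS[OF g epred i] iL sandwich[OF i pr[OF g] eb] by (intro integral_mono) (auto simp: space_mu)
    also have "\<dots> = C i / 2 * gamma D X (f i) g \<eta>"
      unfolding gam by simp
    finally show ?thesis using 1 Ldiff[OF g] by simp
  qed
  have Gnn: "0 \<le> gamma D X F g1 g2" for F g1 g2 unfolding gam by (simp add: integral_nonneg)
  have hpred: "predictor X hhat" using H(2)[OF hhat(1)] .
  have Geq: "gamma D X (f i) hhat \<eta> = gamma D X (f i) hhat hstar" if i: "i \<in> {1,2}" for i
  proof -
    have ci: "c i > 0" using Cc[OF i] by simp
    have "c i / 2 * gamma D X (f i) hstar \<eta> \<le> 0"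
      using sand[OF hstar(1) i] hstar(2)[OF epred] by linarith
    then have "gamma D X (f i) hstar \<eta> \<le> 0" using ci by (simp add: mult_le_0_iff)
    then have "gamma D X (f i) hstar \<eta> = 0" using Gnn by (simp add: order_antisym)
    then have "AE x in \<mu>. (f i (hstar x) - f i (\<eta> x))\<^sup>2 = 0"
      unfolding gam using integral_nonneg_eq_0_iff_AE[OF intS[OF hstar(1) epred i]] by simp
    then have ae: "AE x in \<mu>. (f i (hhat x) - f i (\<eta> x))\<^sup>2 = (f i (hhat x) - f i (hstar x))\<^sup>2"
      by eventually_elim simp
    show ?thesis unfolding gam
      by (rule integral_cong_AE[OF _ _ ae]) (use pm[OF hpred i] pm[OF epred i] pm[OF hstar(1) i] in \<open>simp_all add: bmu\<close>)
  qed
  have tri: "gamma D X (f i) g hhat \<le> 2 * gamma D X (f i) g \<eta> + 2 * gamma D X (f i) hhat \<eta>"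
    if g: "predictor X g" and i: "i \<in> {1,2}" for g i
  proof -
    have "gamma D X (f i) g hhat \<le> (\<integral>x. 2 * (f i (g x) - f i (\<eta> x))\<^sup>2 + 2 * (f i (hhat x) - f i (\<eta> x))\<^sup>2 \<partial>\<mu>)"
      unfolding gam
    proof (rule integral_mono)
      show "integrable \<mu> (\<lambda>x. (f i (g x) - f i (hhat x))\<^sup>2)" by (rule intS[OF g hpred i])
      show "integrable \<mu> (\<lambda>x. 2 * (f i (g x) - f i (\<eta> x))\<^sup>2 + 2 * (f i (hhat x) - f i (\<eta> x))\<^sup>2)"
        using intS[OF g epred i] intS[OF hpred epred i] by simp
      fix x
      show "(f i (g x) - f i (hhat x))\<^sup>2 \<le> 2 * (f i (g x) - f i (\<eta> x))\<^sup>2 + 2 * (f i (hhat x) - f i (\<eta> x))\<^sup>2"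
        by (smt (verit) zero_le_power2 power2_diff power2_sum)
    qed
    also have "\<dots> = 2 * gamma D X (f i) g \<eta> + 2 * gamma D X (f i) hhat \<eta>"
      unfolding gam using intS[OF g epred i] intS[OF hpred epred i] by simp
    finally show ?thesis .
  qed
  show ?thesis
  proof (intro ballI)
    fix h and i :: nat assume h: "h \<in> H" and i: "i \<in> {1,2}"
    have g: "predictor X h" using H(2)[OF h] .
    have ci: "c i > 0" using Cc[OF i] by simp
    define G where "G = gamma D X (f i) h hhat"
    define G1 where "G1 = gamma D X (f i) h \<eta>"
    define G2 where "G2 = gamma D X (f i) hhat \<eta>"
    define Rh where "Rh = risk D (f 1) (f 2) h - risk D (f 1) (f 2) \<eta>"
    define Rt where "Rt = risk D (f 1) (f 2) hhat - risk D (f 1) (f 2) \<eta>"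
    have a1: "G \<le> 2 * G1 + 2 * G2" using tri[OF g i] unfolding G_def G1_def G2_def .
    have a2: "c i / 2 * G1 \<le> Rh" using sand[OF g i] unfolding G1_def Rh_def by simp
    have a3: "Rt \<le> C i / 2 * G2" using sand[OF hpred i] unfolding G2_def Rt_def by simp
    have b2: "2 * G1 \<le> 4 / c i * Rh" using a2 ci by (simp add: field_simps)
    have b3: "4 / c i * Rt \<le> 2 * (C i / c i) * G2" using a3 ci by (simp add: field_simps)
    have "G \<le> 4 / c i * (Rh - Rt) + 2 * (C i / c i + 1) * G2"
    proof -
      have "4 / c i * (Rh - Rt) + 2 * (C i / c i + 1) * G2
          = 4 / c i * Rh - 4 / c i * Rt + 2 * (C i / c i) * G2 + 2 * G2"
        by (simp add: algebra_simps diff_divide_distrib)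
      then show ?thesis using a1 b2 b3 by linarith
    qed
    moreover have "Rh - Rt = risk D (f 1) (f 2) h - risk D (f 1) (f 2) hhat"
      unfolding Rh_def Rt_def by simp
    ultimately show "gamma D X (f i) h hhat \<le> 4 / c i * (risk D (f 1) (f 2) h - risk D (f 1) (f 2) hhat)
      + 2 * (C i / c i + 1) * gamma D X (f i) hhat hstar"
      unfolding G_def G2_def Geq[OF i] by simp
  qed
qed

end
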